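(* Let $\mathcal{H}$ be a separable infinite-dimensional complex Hilbert space, let $T\in\mathcal{B}(\mathcal{H})$ be quasinilpotent, and let $A\in\mathcal{B}(\mathcal{H})$ commute with $T$. If $x\in\mathcal{H}$ and $Ax\neq0$, then $k_{Ax}(T)\le k_x(T)$.
   Context: For quasinilpotent $T$ and $x\neq 0$, $k_x(T)=\limsup_{\lambda\to0}\frac{\ln\|(\lambda-T)^{-1}x\|}{\ln\|(\lambda-T)^{-1}\|}$. *)

theory Defs
  imports "HOL-Analysis.Analysis"
begin

class complex_hilbert = banach +
  fixes scaleC :: "complex \<Rightarrow> 'a \<Rightarrow> 'a"
    and cinner :: "'a \<Rightarrow> 'a \<Rightarrow> complex"
  assumes scaleC_add_right: "scaleC a (x + y) = scaleC a x + scaleC a y"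
    and scaleC_add_left: "scaleC (a + b) x = scaleC a x + scaleC b x"
    and scaleC_scaleC: "scaleC a (scaleC b x) = scaleC (a * b) x"
    and scaleC_one: "scaleC 1 x = x"
    and scaleR_scaleC: "scaleR r x = scaleC (complex_of_real r) x"
    and cinner_conj_sym: "cinner x y = cnj (cinner y x)"
    and cinner_add_left: "cinner (x + y) z = cinner x z + cinner y z"
    and cinner_scaleC_left: "cinner (scaleC a x) y = cnj a * cinner x y"
    and cinner_self_nonneg: "0 \<le> Re (cinner x x)"
    and cinner_self_eq_zero: "cinner x x = 0 \<longleftrightarrow> x = 0"
    and norm_eq_sqrt_cinner: "norm x = sqrt (Re (cinner x x))"

definition cinfinite_dimensional :: "'a::complex_hilbert itself \<Rightarrow> bool" where
  "cinfinite_dimensional _ \<longleftrightarrow>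
     \<not> (\<exists>F::'a set. finite F \<and> (\<forall>x. \<exists>c. x = (\<Sum>v\<in>F. scaleC (c v) v)))"

definition bounded_clinear :: "('a::complex_hilbert \<Rightarrow> 'b::complex_hilbert) \<Rightarrow> bool" where
  "bounded_clinear f \<longleftrightarrow>
     (\<forall>x y. f (x + y) = f x + f y) \<and> (\<forall>c x. f (scaleC c x) = scaleC c (f x)) \<and>
     (\<exists>K. \<forall>x. norm (f x) \<le> norm x * K)"

definition shift_op :: "complex \<Rightarrow> ('a::complex_hilbert \<Rightarrow> 'a) \<Rightarrow> 'a \<Rightarrow> 'a" where
  "shift_op l T = (\<lambda>x. scaleC l x - T x)"

definition op_invertible :: "('a::complex_hilbert \<Rightarrow> 'a) \<Rightarrow> bool" where
  "op_invertible S \<longleftrightarrow> (\<exists>R. bounded_clinear R \<and> (\<forall>x. R (S x) = x) \<and> (\<forall>x. S (R x) = x))"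

definition cspectrum :: "('a::complex_hilbert \<Rightarrow> 'a) \<Rightarrow> complex set" where
  "cspectrum T = {l. \<not> op_invertible (shift_op l T)}"

definition quasinilpotent :: "('a::complex_hilbert \<Rightarrow> 'a) \<Rightarrow> bool" where
  "quasinilpotent T \<longleftrightarrow> bounded_clinear T \<and> cspectrum T = {0}"

definition resolvent :: "('a::complex_hilbert \<Rightarrow> 'a) \<Rightarrow> complex \<Rightarrow> 'a \<Rightarrow> 'a" where
  "resolvent T l = (THE R. bounded_clinear R \<and> (\<forall>x. R (shift_op l T x) = x)
                                            \<and> (\<forall>x. shift_op l T (R x) = x))"

definition local_index :: "('a::complex_hilbert \<Rightarrow> 'a) \<Rightarrow> 'a \<Rightarrow> ereal" where
  "local_index T x = Limsup (at (0::complex))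
     (\<lambda>l. ereal (ln (norm (resolvent T l x)) / ln (onorm (resolvent T l))))"

end

theory Submission imports Defs begin

lemma neumann:
  fixes S :: "'a::banach \<Rightarrow> 'a"
  assumes bl: "bounded_linear S" and s: "onorm S < 1"
  shows "\<exists>Q. (\<exists>K. \<forall>x. norm (Q x) \<le> norm x * K) \<and> (\<forall>x. Q (x - S x) = x) \<and> (\<forall>x. Q x - S (Q x) = x)"
proof -
  interpret S: bounded_linear S by fact
  let ?s = "onorm S"
  have s0: "0 \<le> ?s" using onorm_pos_le[OF bl] .
  have pw: "norm ((S^^n) x) \<le> ?s^n * norm x" for n x
  proof (induction n)
    case 0 then show ?case by simp
  next
    case (Suc n)
    have "norm ((S^^Suc n) x) = norm (S ((S^^n) x))" by simp
    also have "\<dots> \<le> ?s * norm ((S^^n) x)" by (rule onorm[OF bl])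
    also have "\<dots> \<le> ?s * (?s^n * norm x)" by (rule mult_left_mono[OF Suc s0])
    finally show ?case by (simp add: mult.assoc)
  qed
  have sg: "summable (\<lambda>n. ?s^n * norm x)" for x
    using summable_geometric[of ?s] s s0 by (intro summable_mult2) auto
  have sm: "summable (\<lambda>n. (S^^n) x)" for x
    by (rule summable_comparison_test'[OF sg pw])
  have lin: "(S^^n) (x - y) = (S^^n) x - (S^^n) y" for n x y
    by (induction n) (auto simp: S.diff)
  define Q where "Q x = (\<Sum>n. (S^^n) x)" for x
  have bnd: "norm (Q x) \<le> norm x * (1 / (1 - ?s))" for x
  proof -
    have "norm (Q x) \<le> (\<Sum>n. ?s^n * norm x)" unfolding Q_def
      by (rule norm_suminf_le[OF pw sg])
    also have "\<dots> = (\<Sum>n. ?s^n) * norm x" using suminf_mult2[of "\<lambda>n. ?s^n" "norm x"]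
        summable_geometric[of ?s] s s0 by auto
    also have "\<dots> = norm x * (1 / (1 - ?s))" using suminf_geometric[of ?s] s s0 by auto
    finally show ?thesis .
  qed
  have SQ: "S (Q x) = (\<Sum>n. (S^^Suc n) x)" for x
    unfolding Q_def using S.suminf[OF sm] by simp
  have QS: "Q (S x) = S (Q x)" for x
  proof -
    have "(S^^n) (S x) = (S^^Suc n) x" for n by (simp only: funpow_Suc_right comp_def)
    then show ?thesis unfolding Q_def using S.suminf[OF sm, of x] by simp
  qed
  have tele: "Q x - S (Q x) = x" for x
    unfolding SQ using suminf_split_head[OF sm, of x] unfolding Q_def by simp
  have Qd: "Q (x - y) = Q x - Q y" for x y
    unfolding Q_def lin using suminf_diff[OF sm sm] by simp
  have "Q (x - S x) = x" for x using Qd QS tele by simp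
  then show ?thesis using bnd tele by blast
qed


lemma scaleC_zero_right: "scaleC c (0::'a::complex_hilbert) = 0"
  using scaleC_add_right[of c "0::'a" 0] by simp

lemma scaleC_zero_left: "scaleC 0 (x::'a::complex_hilbert) = 0"
  using scaleC_add_left[of 0 0 x] by simp

lemma scaleC_diff_right: "scaleC c ((x::'a::complex_hilbert) - y) = scaleC c x - scaleC c y"
  using scaleC_add_right[of c "x - y" y] by (simp add: eq_diff_eq)

lemma norm_scaleC: "norm (scaleC c (x::'a::complex_hilbert)) = cmod c * norm x"
proof -
  have r: "cinner x x = complex_of_real (Re (cinner x x))"
    using cinner_conj_sym[of x x] by (metis complex_cnj_complex_of_real complex_is_Real_iff Reals_cnj_iff of_real_Re)
  have "cinner (scaleC c x) (scaleC c x) = cnj c * cnj (cnj c * cinner x x)"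
    by (simp add: cinner_scaleC_left cinner_conj_sym[of x "scaleC c x"])
  also have "\<dots> = complex_of_real ((cmod c)^2 * Re (cinner x x))"
  proof -
    have cc: "cnj c * c = complex_of_real ((cmod c)^2)" using complex_norm_square[of c] by (simp add: mult.commute)
    have "cnj c * cnj (cnj c * cinner x x) = (cnj c * c) * cnj (cinner x x)" by simp
    also have "\<dots> = (cnj c * c) * cinner x x" using cinner_conj_sym[of x x] by simp
    also have "\<dots> = complex_of_real ((cmod c)^2 * Re (cinner x x))" by (subst r) (simp only: cc of_real_mult)
    finally show ?thesis .
  qed
  finally have "Re (cinner (scaleC c x) (scaleC c x)) = (cmod c)^2 * Re (cinner x x)" by simp
  then show ?thesis by (simp add: norm_eq_sqrt_cinner real_sqrt_mult)
qed

lemma bcl_bl: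
  assumes "bounded_clinear (f::'a::complex_hilbert \<Rightarrow> 'b::complex_hilbert)"
  shows "bounded_linear f"
proof -
  from assms have a: "\<And>x y. f (x + y) = f x + f y" and c: "\<And>c x. f (scaleC c x) = scaleC c (f x)"
    and b: "\<exists>K. \<forall>x. norm (f x) \<le> norm x * K" by (auto simp: bounded_clinear_def)
  show ?thesis
    by (rule bounded_linear_intro[where K="SOME K. \<forall>x. norm (f x) \<le> norm x * K"])
       (auto simp: a c scaleR_scaleC intro: someI_ex[OF b, THEN spec])
qed

lemma bcl_add: "bounded_clinear f \<Longrightarrow> f (x + y) = f x + f y"
  by (simp add: bounded_clinear_def)
lemma bcl_scaleC: "bounded_clinear f \<Longrightarrow> f (scaleC c x) = scaleC c (f x)"
  by (simp add: bounded_clinear_def)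
lemma bcl_diff: "bounded_clinear f \<Longrightarrow> f (x - y) = f x - f y"
  using linear_diff[OF bounded_linear.linear[OF bcl_bl]] by blast
lemma bcl_zero: "bounded_clinear f \<Longrightarrow> f 0 = 0"
  using linear_0[OF bounded_linear.linear[OF bcl_bl]] by blast

lemma inverse_bcl:
  fixes S Q :: "'a::complex_hilbert \<Rightarrow> 'a"
  assumes Sa: "\<And>x y. S (x + y) = S x + S y" and Sc: "\<And>c x. S (scaleC c x) = scaleC c (S x)"
    and l: "\<And>x. Q (S x) = x" and r: "\<And>x. S (Q x) = x"
    and b: "\<exists>K. \<forall>x. norm (Q x) \<le> norm x * K"
  shows "bounded_clinear Q"
proof -
  have "Q (x + y) = Q x + Q y" for x y
    by (metis Sa l r)
  moreover have "Q (scaleC c x) = scaleC c (Q x)" for c x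
    by (metis Sc l r)
  ultimately show ?thesis using b by (simp add: bounded_clinear_def)
qed

lemma resolvent_props:
  assumes "op_invertible (shift_op l T)"
  shows "bounded_clinear (resolvent T l) \<and> (\<forall>x. resolvent T l (shift_op l T x) = x)
          \<and> (\<forall>x. shift_op l T (resolvent T l x) = x)"
proof -
  from assms obtain R where R: "bounded_clinear R" "\<forall>x. R (shift_op l T x) = x" "\<forall>x. shift_op l T (R x) = x"
    by (auto simp: op_invertible_def)
  have "\<exists>!R. bounded_clinear R \<and> (\<forall>x. R (shift_op l T x) = x) \<and> (\<forall>x. shift_op l T (R x) = x)"
  proof (rule ex1I[of _ R])
    show "bounded_clinear R \<and> (\<forall>x. R (shift_op l T x) = x) \<and> (\<forall>x. shift_op l T (R x) = x)" using R by blast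
  next
    fix R' assume "bounded_clinear R' \<and> (\<forall>x. R' (shift_op l T x) = x) \<and> (\<forall>x. shift_op l T (R' x) = x)"
    then show "R' = R" using R by (metis ext)
  qed
  then show ?thesis unfolding resolvent_def by (rule theI')
qed


lemma shift_clinear:
  assumes "bounded_clinear T"
  shows "shift_op l T (x + y) = shift_op l T x + shift_op l T y"
    and "shift_op l T (scaleC c x) = scaleC c (shift_op l T x)"
  using assms by (auto simp: shift_op_def bcl_add bcl_scaleC scaleC_add_right scaleC_scaleC
      scaleC_diff_right mult.commute algebra_simps)

lemma resolvent_norm_ge:
  fixes T :: "'a::complex_hilbert \<Rightarrow> 'a"
  assumes q: "quasinilpotent T" and l: "l \<noteq> 0"
  shows "1 \<le> cmod l * onorm (resolvent T l)"
proof (rule ccontr)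
  assume less: "\<not> 1 \<le> cmod l * onorm (resolvent T l)"
  have Tb: "bounded_clinear T" and sp: "cspectrum T = {0}" using q by (auto simp: quasinilpotent_def)
  have "op_invertible (shift_op l T)" using sp l by (auto simp: cspectrum_def)
  then have RP: "bounded_clinear (resolvent T l)" "\<And>x. resolvent T l (shift_op l T x) = x"
      "\<And>x. shift_op l T (resolvent T l x) = x" using resolvent_props by blast+
  define R where "R = resolvent T l"
  define Sh where "Sh = shift_op l T"
  define S where "S = (\<lambda>y. scaleC l (R y))"
  have Rc: "bounded_clinear R" using RP(1) R_def by simp
  have Rb: "bounded_linear R" using bcl_bl Rc by blast
  have Rl: "R (Sh x) = x" "Sh (R x) = x" for x using RP R_def Sh_def by auto
  have nb: "norm (scaleC l (R x)) \<le> norm x * (cmod l * onorm R)" for x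
  proof -
    have "cmod l * norm (R x) \<le> cmod l * (onorm R * norm x)" by (rule mult_left_mono[OF onorm[OF Rb]]) simp
    then show ?thesis by (simp add: norm_scaleC ac_simps)
  qed
  have Sb: "bounded_linear S" unfolding S_def
    by (rule bounded_linear_intro[where K="cmod l * onorm R"])
       (auto simp: scaleC_add_right bcl_add[OF Rc] bcl_scaleC[OF Rc]
         scaleR_scaleC scaleC_scaleC mult.commute nb[unfolded mult.commute[of "cmod l"]])
  have "onorm S \<le> cmod l * onorm R"
    by (rule onorm_bound) (use nb onorm_pos_le[OF Rb] in \<open>auto simp: S_def mult.commute\<close>)
  then have "onorm S < 1" using less R_def by simp
  then obtain Q where Qb: "\<exists>K. \<forall>x. norm (Q x) \<le> norm x * K" and Ql: "\<And>x. Q (x - S x) = x"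
     and Qr: "\<And>x. Q x - S (Q x) = x" using neumann[OF Sb] by blast
  have Sha: "Sh (x - y) = Sh x - Sh y" "Sh (scaleC c x) = scaleC c (Sh x)" for x y c
    unfolding Sh_def using shift_clinear[OF Tb]
    by (metis add_diff_cancel diff_add_cancel) (simp add: shift_clinear[OF Tb])
  have e1: "shift_op 0 T y = Sh (y - S y)" for y
    by (simp add: Sha S_def Rl) (simp add: Sh_def shift_op_def scaleC_zero_left)
  have e2: "shift_op 0 T y = Sh y - S (Sh y)" for y
    by (simp add: S_def Rl) (simp add: Sh_def shift_op_def scaleC_zero_left)
  define P where "P = (\<lambda>y. Q (R y))"
  have P1: "P (shift_op 0 T y) = y" for y unfolding P_def e1 Rl Ql ..
  have P2: "shift_op 0 T (P y) = y" for y unfolding P_def e1 Qr Rl ..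
  have Pb: "\<exists>K. \<forall>x. norm (P x) \<le> norm x * K"
  proof -
    obtain K where K: "\<And>x. norm (Q x) \<le> norm x * K" using Qb by blast
    show ?thesis
    proof (intro exI allI)
      fix x
      have "norm (P x) \<le> norm (R x) * K" unfolding P_def by (rule K)
      also have "\<dots> \<le> norm (R x) * max K 0" by (rule mult_left_mono) auto
      also have "\<dots> \<le> (onorm R * norm x) * max K 0"
        by (rule mult_right_mono) (auto simp: onorm[OF Rb])
      finally show "norm (P x) \<le> norm x * (onorm R * max K 0)"
        by (smt (verit, ccfv_threshold) mult.assoc mult.commute)
    qed
  qed
  have "bounded_clinear P"
    by (rule inverse_bcl[OF shift_clinear[OF Tb] P1 P2 Pb])
  then have "op_invertible (shift_op 0 T)" unfolding op_invertible_def using P1 P2 by blast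
  then show False using sp by (auto simp: cspectrum_def)
qed


theorem lemma4p7:
  fixes T A :: "'a::complex_hilbert \<Rightarrow> 'a" and x :: 'a
  assumes "separable_space (euclidean :: 'a topology)"
    and "cinfinite_dimensional TYPE('a)"
    and "quasinilpotent T"
    and "bounded_clinear A"
    and "A \<circ> T = T \<circ> A"
    and "A x \<noteq> 0"
  shows "local_index T (A x) \<le> local_index T x"
proof -
  have Tb: "bounded_clinear T" and sp: "cspectrum T = {0}" using assms(3) by (auto simp: quasinilpotent_def)
  have Ab: "bounded_clinear A" by fact
  have Al: "bounded_linear A" using bcl_bl[OF Ab] .
  have x0: "x \<noteq> 0" using assms(6) bcl_zero[OF Ab] by auto
  define a where "a = onorm A"
  have a0: "0 < a"
  proof -
    have "0 < norm (A x)" using assms(6) by simp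
    also have "norm (A x) \<le> a * norm x" unfolding a_def by (rule onorm[OF Al])
    finally show ?thesis using onorm_pos_le[OF Al] a_def by (simp add: zero_less_mult_iff)
  qed
  have comm: "T (A y) = A (T y)" for y using assms(5) by (metis comp_apply)
  have key: "resolvent T l (A x) = A (resolvent T l x) \<and> resolvent T l x \<noteq> 0
     \<and> resolvent T l (A x) \<noteq> 0 \<and> bounded_clinear (resolvent T l)
     \<and> 1 \<le> cmod l * onorm (resolvent T l)" if l: "l \<noteq> 0" for l
  proof -
    have "op_invertible (shift_op l T)" using sp l by (auto simp: cspectrum_def)
    then have RP0: "bounded_clinear (resolvent T l)" using resolvent_props by blast
    from \<open>op_invertible _\<close> have RP: "\<And>x. resolvent T l (shift_op l T x) = x"
      "\<And>x. shift_op l T (resolvent T l x) = x" using resolvent_props by blast+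
    have sa: "shift_op l T (A y) = A (shift_op l T y)" for y
      by (simp add: shift_op_def bcl_diff[OF Ab] bcl_scaleC[OF Ab] comm)
    have 1: "resolvent T l (A x) = A (resolvent T l x)"
      by (metis RP sa)
    have 2: "resolvent T l x \<noteq> 0"
    proof
      assume "resolvent T l x = 0"
      then have "x = shift_op l T 0" using RP(2)[of x] by simp
      also have "\<dots> = 0" by (simp add: shift_op_def scaleC_zero_right bcl_zero[OF Tb])
      finally show False using x0 by simp
    qed
    have 3: "resolvent T l (A x) \<noteq> 0"
    proof
      assume "resolvent T l (A x) = 0"
      then have "A x = shift_op l T 0" using RP(2)[of "A x"] by simp
      also have "\<dots> = 0" by (simp add: shift_op_def scaleC_zero_right bcl_zero[OF Tb])
      finally show False using assms(6) by simp
    qed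
    show ?thesis using 1 2 3 RP0 resolvent_norm_ge[OF assms(3) l] by blast
  qed
  show ?thesis unfolding local_index_def
  proof (rule ereal_le_epsilon2)
    fix e :: real assume e: "0 < e"
    define M where "M = max 1 (\<bar>ln a\<bar> / e)"
    have ev: "eventually (\<lambda>l. ereal (ln (norm (resolvent T l (A x))) / ln (onorm (resolvent T l)))
       \<le> ereal e + ereal (ln (norm (resolvent T l x)) / ln (onorm (resolvent T l)))) (at 0)"
      unfolding eventually_at
    proof (intro exI[of _ "exp (- M)"] conjI ballI impI)
      show "0 < exp (- M)" by simp
      fix l :: complex assume "l \<in> UNIV" "l \<noteq> 0 \<and> dist l 0 < exp (- M)"
      from this(2) have l: "l \<noteq> 0" and ls: "cmod l < exp (- M)" by auto
      define R where "R = resolvent T l"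
      define L where "L = ln (onorm R)"
      have k: "R (A x) = A (R x)" "R x \<noteq> 0" "1 \<le> cmod l * onorm R" "R (A x) \<noteq> 0"
        "bounded_clinear R" using key[OF l] R_def by auto
      have Rb: "bounded_linear R" using bcl_bl[OF k(5)] .
      have "onorm R \<noteq> 0" using k(3) by auto
      then have oR: "0 < onorm R" using onorm_pos_le[OF Rb] by linarith
      have "cmod l * onorm R < exp (- M) * onorm R" by (rule mult_strict_right_mono[OF ls oR])
      then have "1 < onorm R * exp (- M)" using k(3) by (simp add: mult.commute)
      then have "exp M < onorm R" by (simp add: exp_minus field_simps)
      then have LM: "M < L" unfolding L_def using oR by (metis exp_less_cancel_iff exp_ln)
      have L0: "0 < L" using LM M_def by linarith
      have aL: "ln a / L \<le> e"
      proof -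
        have "\<bar>ln a\<bar> / e \<le> M" unfolding M_def by simp
        then have "\<bar>ln a\<bar> \<le> M * e" using e by (simp add: field_simps)
        moreover have "M * e \<le> L * e" using LM e by (intro mult_right_mono) auto
        ultimately have "\<bar>ln a\<bar> \<le> e * L" by (simp add: mult.commute)
        then show ?thesis using L0 by (simp add: field_simps)
      qed
      have "ln (norm (R (A x))) \<le> ln (a * norm (R x))"
      proof (subst ln_le_cancel_iff)
        show "0 < norm (R (A x))" using k(4) by simp
        show "0 < a * norm (R x)" using k(2) a0 by simp
        show "norm (R (A x)) \<le> a * norm (R x)" unfolding k(1) a_def by (rule onorm[OF Al])
      qed
      then have "ln (norm (R (A x))) \<le> ln a + ln (norm (R x))" using a0 k(2) by (simp add: ln_mult)
      then have "ln (norm (R (A x))) / L \<le> (ln a + ln (norm (R x))) / L"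
        using L0 by (simp add: divide_right_mono)
      also have "\<dots> = ln a / L + ln (norm (R x)) / L" by (simp add: add_divide_distrib)
      finally have "ln (norm (R (A x))) / L \<le> e + ln (norm (R x)) / L" using aL by linarith
      then show "ereal (ln (norm (resolvent T l (A x))) / ln (onorm (resolvent T l)))
       \<le> ereal e + ereal (ln (norm (resolvent T l x)) / ln (onorm (resolvent T l)))"
        unfolding R_def L_def by simp
    qed
    have "Limsup (at 0) (\<lambda>l. ereal (ln (norm (resolvent T l (A x))) / ln (onorm (resolvent T l))))
       \<le> Limsup (at 0) (\<lambda>l. ereal e + ereal (ln (norm (resolvent T l x)) / ln (onorm (resolvent T l))))"
      by (rule Limsup_mono[OF ev])
    also have "\<dots> = ereal e + Limsup (at 0) (\<lambda>l. ereal (ln (norm (resolvent T l x)) / ln (onorm (resolvent T l))))"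
      by (rule Limsup_add_ereal_left) auto
    finally show "Limsup (at 0) (\<lambda>l. ereal (ln (norm (resolvent T l (A x))) / ln (onorm (resolvent T l))))
       \<le> Limsup (at 0) (\<lambda>l. ereal (ln (norm (resolvent T l x)) / ln (onorm (resolvent T l)))) + ereal e"
      by (simp add: add.commute)
  qed
qed

end
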